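(* Let $u_0\in(0,1)$. Assume $\eta(X)$ has an atomless distribution and consider only scoring functions $s$ for which $s(X)$ has an atomless distribution. Then: (1) for every such $s$ and every such $s^*\in\mathcal S^*$, $W(s,u_0)\le W(s^*,u_0)$; (2) for every such $s$, \[ W(s,u_0)=\frac p2\,\beta(s,u_0)\big(2-\beta(s,u_0)\big)+(1-p)\,\mathrm{LocAUC}(s,u_0). \]
   Context: $(X,Y)$ random pair in $\mathcal X\times\{-1,+1\}$, $(X',Y')$ an independent copy, $\eta(x)=\mathbb P\{Y=1\mid X=x\}$, $p=\mathbb P\{Y=1\}\in(0,1)$. For a scoring function $s$, $F_s$ is the cdf of $s(X)$, $Q(s,v)=\inf\{t:F_s(t)\ge v\}$, $C_{s,u}=\{x:s(x)\ge Q(s,1-u)\}$, $C^*_u=C_{\eta,u}$, $\beta(s,u)=\mathbb P\{s(X)\ge Q(s,1-u)\mid Y=1\}$, and $\mathrm{LocAUC}(s,u)=\mathbb P\{s(X)>s(X'),\ s(X)\ge Q(s,1-u)\mid Y=1,Y'=-1\}$. With $\Phi_{u_0}(v)=v\,\mathbb I\{v>1-u_0\}$, the $W$-criterion at rate $u_0$ is $W(s,u_0)=\mathbb E\big(\Phi_{u_0}(F_s(s(X)))\mid Y=1\big)$. $\mathcal S^*$ is the set of scoring functions $s^*$ with $s^*(x)=\eta(x)$ for $x\in C^*_{u_0}$ and $s^*(x)<\inf_{C^*_{u_0}}\eta$ for $x\notin C^*_{u_0}$. *)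

theory Defs
  imports "HOL-Probability.Probability"
begin

definition condP :: "'w measure \<Rightarrow> 'w set \<Rightarrow> 'w set \<Rightarrow> real" where
  "condP M A B = measure M (A \<inter> B) / measure M B"

definition cdfS :: "'w measure \<Rightarrow> ('w \<Rightarrow> 'a) \<Rightarrow> ('a \<Rightarrow> real) \<Rightarrow> real \<Rightarrow> real" where
  "cdfS M X s t = measure M {\<omega> \<in> space M. s (X \<omega>) \<le> t}"

definition Qf :: "'w measure \<Rightarrow> ('w \<Rightarrow> 'a) \<Rightarrow> ('a \<Rightarrow> real) \<Rightarrow> real \<Rightarrow> real" where
  "Qf M X s v = Inf {t. cdfS M X s t \<ge> v}"

definition Cset :: "'w measure \<Rightarrow> ('w \<Rightarrow> 'a) \<Rightarrow> 'a measure \<Rightarrow> ('a \<Rightarrow> real) \<Rightarrow> real \<Rightarrow> 'a set" where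
  "Cset M X N s u = {x \<in> space N. s x \<ge> Qf M X s (1 - u)}"

definition betaS :: "'w measure \<Rightarrow> ('w \<Rightarrow> 'a) \<Rightarrow> ('w \<Rightarrow> real) \<Rightarrow> ('a \<Rightarrow> real) \<Rightarrow> real \<Rightarrow> real" where
  "betaS M X Y s u = condP M {\<omega> \<in> space M. s (X \<omega>) \<ge> Qf M X s (1 - u)} {\<omega> \<in> space M. Y \<omega> = 1}"

definition LocAUC :: "'w measure \<Rightarrow> ('w \<Rightarrow> 'a) \<Rightarrow> ('w \<Rightarrow> real) \<Rightarrow> ('w \<Rightarrow> 'a) \<Rightarrow> ('w \<Rightarrow> real)
    \<Rightarrow> ('a \<Rightarrow> real) \<Rightarrow> real \<Rightarrow> real" where
  "LocAUC M X Y X' Y' s u = condP M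
     {\<omega> \<in> space M. s (X \<omega>) > s (X' \<omega>) \<and> s (X \<omega>) \<ge> Qf M X s (1 - u)}
     {\<omega> \<in> space M. Y \<omega> = 1 \<and> Y' \<omega> = -1}"

definition PhiW :: "real \<Rightarrow> real \<Rightarrow> real" where
  "PhiW u0 v = v * (if v > 1 - u0 then 1 else 0)"

definition Wcrit :: "'w measure \<Rightarrow> ('w \<Rightarrow> 'a) \<Rightarrow> ('w \<Rightarrow> real) \<Rightarrow> ('a \<Rightarrow> real) \<Rightarrow> real \<Rightarrow> real" where
  "Wcrit M X Y s u0 =
     (\<integral>\<omega>. PhiW u0 (cdfS M X s (s (X \<omega>))) * indicator {\<omega> \<in> space M. Y \<omega> = 1} \<omega> \<partial>M)
       / measure M {\<omega> \<in> space M. Y \<omega> = 1}"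

definition atomless_rv :: "'w measure \<Rightarrow> ('w \<Rightarrow> real) \<Rightarrow> bool" where
  "atomless_rv M f \<longleftrightarrow> (\<forall>t. measure M {\<omega> \<in> space M. f \<omega> = t} = 0)"

definition in_Sstar :: "'w measure \<Rightarrow> ('w \<Rightarrow> 'a) \<Rightarrow> 'a measure \<Rightarrow> ('a \<Rightarrow> real) \<Rightarrow> real \<Rightarrow> ('a \<Rightarrow> real) \<Rightarrow> bool" where
  "in_Sstar M X N eta u0 s' \<longleftrightarrow>
     (\<forall>x \<in> Cset M X N eta u0. s' x = eta x) \<and>
     (\<forall>x \<in> space N - Cset M X N eta u0. s' x < (INF y \<in> Cset M X N eta u0. eta y))"

end

theory Submission
  imports Defs
begin


definition Fc :: "'z measure \<Rightarrow> ('z \<Rightarrow> real) \<Rightarrow> real \<Rightarrow> real" where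
  "Fc D g t = measure D {z \<in> space D. g z \<le> t}"

lemma Fc_props:
  assumes D: "prob_space D" and g: "g \<in> borel_measurable D"
    and at: "\<forall>t. measure D {z \<in> space D. g z = t} = 0"
  shows "continuous_on UNIV (Fc D g)" "mono (Fc D g)"
    "(Fc D g \<longlongrightarrow> 1) at_top" "(Fc D g \<longlongrightarrow> 0) at_bot"
    "\<And>t. 0 \<le> Fc D g t" "\<And>t. Fc D g t \<le> 1"
proof -
  interpret P: prob_space D by fact
  interpret R: real_distribution "distr D borel g"
    by (simp add: real_distribution_def real_distribution_axioms_def P.prob_space_distr g)
  have eq: "Fc D g = cdf (distr D borel g)"
  proof
    fix t
    have "cdf (distr D borel g) t = measure D (g -` {..t} \<inter> space D)"
      by (simp add: cdf_def measure_distr g)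
    also have "g -` {..t} \<inter> space D = {z \<in> space D. g z \<le> t}" by auto
    finally show "Fc D g t = cdf (distr D borel g) t" by (simp add: Fc_def)
  qed
  have "\<And>t. isCont (cdf (distr D borel g)) t"
  proof -
    fix t
    have "measure (distr D borel g) {t} = measure D (g -` {t} \<inter> space D)"
      by (simp add: measure_distr g)
    also have "g -` {t} \<inter> space D = {z \<in> space D. g z = t}" by auto
    finally show "isCont (cdf (distr D borel g)) t" using at R.isCont_cdf by simp
  qed
  then show "continuous_on UNIV (Fc D g)" unfolding eq
    by (simp add: continuous_at_imp_continuous_on)
  show "mono (Fc D g)" unfolding eq by (simp add: R.cdf_nondecreasing monoI)
  show "(Fc D g \<longlongrightarrow> 1) at_top" unfolding eq by (rule R.cdf_lim_at_top_prob)
  show "(Fc D g \<longlongrightarrow> 0) at_bot" unfolding eq by (rule R.cdf_lim_at_bot)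
  show "\<And>t. 0 \<le> Fc D g t" unfolding eq by (rule R.cdf_nonneg)
  show "\<And>t. Fc D g t \<le> 1" unfolding eq by (rule R.cdf_bounded_prob)
qed


lemma cdf_ev:
  fixes F :: "real \<Rightarrow> real"
  assumes top: "(F \<longlongrightarrow> 1) at_top" and bot: "(F \<longlongrightarrow> 0) at_bot" and a: "0 < a" "a < 1"
  shows "\<exists>t1. \<forall>t\<ge>t1. a < F t" "\<exists>t0. \<forall>t\<le>t0. F t < a"
proof -
  have "eventually (\<lambda>t. a < F t) at_top" using top a by (simp add: order_tendstoD(1))
  then show "\<exists>t1. \<forall>t\<ge>t1. a < F t" by (simp add: eventually_at_top_linorder)
  have "eventually (\<lambda>t. F t < a) at_bot" using bot a by (simp add: order_tendstoD(2))
  then show "\<exists>t0. \<forall>t\<le>t0. F t < a" by (simp add: eventually_at_bot_linorder)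
qed

lemma Fc_uniform:
  assumes D: "prob_space D" and g: "g \<in> borel_measurable D"
    and at: "\<forall>t. measure D {z \<in> space D. g z = t} = 0"
    and a: "0 < a" "a < 1"
  shows "measure D {z \<in> space D. Fc D g (g z) \<le> a} = a"
proof -
  note P = Fc_props[OF D g at]
  define F where "F = Fc D g"
  obtain t1 where t1: "\<forall>t\<ge>t1. a < F t" using cdf_ev[OF P(3) P(4) a] F_def by blast
  obtain t0 where t0: "\<forall>t\<le>t0. F t < a" using cdf_ev[OF P(3) P(4) a] F_def by blast
  define A where "A = {t. F t \<le> a}"
  have "t0 \<in> A" using t0 A_def by (simp add: less_imp_le)
  then have ne: "A \<noteq> {}" by blast
  have ub: "t \<le> t1" if "t \<in> A" for t
  proof (rule ccontr)
    assume "\<not> t \<le> t1" then have "a < F t" using t1 by simp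
    then show False using that A_def by simp
  qed
  then have bdd: "bdd_above A" by (rule bdd_aboveI)
  have cl: "closed A" unfolding A_def F_def
    by (intro closed_Collect_le) (auto intro: P(1) continuous_on_subset)
  define ts where "ts = Sup A"
  have tsA: "ts \<in> A" unfolding ts_def using closed_contains_Sup[OF ne bdd cl] .
  have Fts: "F ts = a"
  proof (rule ccontr)
    assume "F ts \<noteq> a"
    then have lt: "F ts < a" using tsA A_def by auto
    have "ts \<le> t1" using tsA by (rule ub)
    moreover have "a \<le> F t1" using t1 by (simp add: less_imp_le)
    moreover have "continuous_on {ts..t1} F" using P(1) F_def continuous_on_subset by blast
    ultimately obtain x where x: "ts \<le> x" "x \<le> t1" "F x = a"
      using IVT'[of F ts a t1] lt by auto
    then have "x \<in> A" using A_def by simp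
    then have "x \<le> ts" unfolding ts_def using bdd by (simp add: cSup_upper)
    then show False using x lt by simp
  qed
  have "{z \<in> space D. Fc D g (g z) \<le> a} = {z \<in> space D. g z \<le> ts}"
  proof (intro Collect_cong conj_cong refl iffI)
    fix z assume "g z \<le> ts"
    then show "Fc D g (g z) \<le> a" using monoD[OF P(2) \<open>g z \<le> ts\<close>] Fts F_def by simp
  next
    fix z assume "Fc D g (g z) \<le> a"
    then have "g z \<in> A" using A_def F_def by simp
    then show "g z \<le> ts" unfolding ts_def using bdd by (simp add: cSup_upper)
  qed
  moreover have "measure D {z \<in> space D. g z \<le> ts} = a" using Fts unfolding F_def Fc_def .
  ultimately show ?thesis by simp
qed

lemma Fc_quantile:
  assumes D: "prob_space D" and g: "g \<in> borel_measurable D"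
    and at: "\<forall>t. measure D {z \<in> space D. g z = t} = 0"
    and a: "0 < a" "a < 1"
  defines "T \<equiv> Inf {t. a \<le> Fc D g t}"
  shows "Fc D g T = a" "\<And>t. a \<le> Fc D g t \<Longrightarrow> T \<le> t"
    "measure D {z \<in> space D. T \<le> g z \<and> Fc D g (g z) \<le> a} = 0"
proof -
  note P = Fc_props[OF D g at]
  define F where "F = Fc D g"
  obtain t1 where t1: "\<forall>t\<ge>t1. a < F t" using cdf_ev[OF P(3) P(4) a] F_def by blast
  obtain t0 where t0: "\<forall>t\<le>t0. F t < a" using cdf_ev[OF P(3) P(4) a] F_def by blast
  define B where "B = {t. a \<le> F t}"
  have "t1 \<in> B" using t1 B_def by (simp add: less_imp_le)
  then have ne: "B \<noteq> {}" by blast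
  have lb: "t0 \<le> t" if "t \<in> B" for t
  proof (rule ccontr)
    assume "\<not> t0 \<le> t" then have "F t < a" using t0 by simp
    then show False using that B_def by simp
  qed
  then have bdd: "bdd_below B" by (rule bdd_belowI)
  have cl: "closed B" unfolding B_def F_def
    by (intro closed_Collect_le) (auto intro: P(1) continuous_on_subset)
  have TB: "T \<in> B" unfolding T_def B_def F_def[symmetric] using closed_contains_Inf[OF ne bdd cl] B_def by simp
  show low: "\<And>t. a \<le> Fc D g t \<Longrightarrow> T \<le> t"
    unfolding T_def using bdd B_def F_def by (simp add: cInf_lower)
  show FT: "Fc D g T = a"
  proof (rule ccontr)
    assume "Fc D g T \<noteq> a"
    then have lt: "a < F T" using TB B_def F_def by auto
    have "t0 \<le> T" using TB by (rule lb)
    moreover have "F t0 \<le> a" using t0 by (simp add: less_imp_le)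
    moreover have "continuous_on {t0..T} F" using P(1) F_def continuous_on_subset by blast
    ultimately obtain x where x: "t0 \<le> x" "x \<le> T" "F x = a"
      using IVT'[of F t0 a T] lt by auto
    then have "T \<le> x" using low F_def by simp
    then show False using x lt by simp
  qed
  interpret prob_space D by fact
  have Fm: "Fc D g \<in> borel_measurable borel" using P(2) borel_measurable_mono by blast
  have Fgm: "(\<lambda>z. Fc D g (g z)) \<in> borel_measurable D" using measurable_compose[OF g Fm] .
  have m1: "{z \<in> space D. T \<le> g z \<and> Fc D g (g z) \<le> a} \<in> sets D"
    using g Fgm by measurable
  have m2: "{z \<in> space D. g z < T} \<in> sets D" using g by measurable
  have m3: "{z \<in> space D. g z = T} \<in> sets D" using g by measurable
  have u: "{z \<in> space D. Fc D g (g z) \<le> a} = {z \<in> space D. T \<le> g z \<and> Fc D g (g z) \<le> a} \<union> {z \<in> space D. g z < T}"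
  proof -
    have "Fc D g (g z) \<le> a" if "g z < T" for z using monoD[OF P(2), of "g z" T] that FT by simp
    then show ?thesis by auto
  qed
  have "measure D {z \<in> space D. Fc D g (g z) \<le> a} = measure D {z \<in> space D. T \<le> g z \<and> Fc D g (g z) \<le> a} + measure D {z \<in> space D. g z < T}"
    unfolding u by (rule finite_measure_Union[OF m1 m2]) auto
  moreover have "measure D {z \<in> space D. g z \<le> T} = measure D {z \<in> space D. g z < T} + measure D {z \<in> space D. g z = T}"
    by (subst finite_measure_Union[OF m2 m3, symmetric]) (auto intro!: arg_cong[where f="measure D"])
  ultimately show "measure D {z \<in> space D. T \<le> g z \<and> Fc D g (g z) \<le> a} = 0"
    using Fc_uniform[OF D g at a] FT at unfolding Fc_def by simp
qed


lemma layer_cake_nn: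
  assumes D: "prob_space D" and f: "f \<in> borel_measurable D" and nn: "\<forall>z\<in>space D. 0 \<le> f z"
  shows "(\<integral>\<^sup>+z. ennreal (f z) \<partial>D) = (\<integral>\<^sup>+r. indicator {0..} r * emeasure D {z\<in>space D. r < f z} \<partial>lborel)"
proof -
  interpret prob_space D by fact
  interpret pair_sigma_finite D lborel by unfold_locales
  have m: "(\<lambda>(z, r). indicator {0..<f z} r :: ennreal) \<in> borel_measurable (D \<Otimes>\<^sub>M lborel)"
  proof -
    have "(\<lambda>(z, r). indicator {0..<f z} r :: ennreal) = (\<lambda>p. if 0 \<le> snd p \<and> snd p < f (fst p) then 1 else 0)"
      by (auto simp: indicator_def fun_eq_iff)
    also have "\<dots> \<in> borel_measurable (D \<Otimes>\<^sub>M lborel)"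
      using f by measurable
    finally show ?thesis .
  qed
  have "(\<integral>\<^sup>+z. ennreal (f z) \<partial>D) = (\<integral>\<^sup>+z. (\<integral>\<^sup>+r. indicator {0..<f z} r \<partial>lborel) \<partial>D)"
    using nn by (intro nn_integral_cong) simp
  also have "\<dots> = (\<integral>\<^sup>+r. (\<integral>\<^sup>+z. indicator {0..<f z} r \<partial>D) \<partial>lborel)"
    using Fubini'[OF m] by simp
  also have "\<dots> = (\<integral>\<^sup>+r. indicator {0..} r * emeasure D {z\<in>space D. r < f z} \<partial>lborel)"
  proof (intro nn_integral_cong)
    fix r :: real
    have "(\<integral>\<^sup>+z. indicator {0..<f z} r \<partial>D) = (\<integral>\<^sup>+z. indicator {0..} r * indicator {z\<in>space D. r < f z} z \<partial>D)"
      by (intro nn_integral_cong) (auto simp: indicator_def)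
    also have "\<dots> = indicator {0..} r * emeasure D {z\<in>space D. r < f z}"
      using f by (intro nn_integral_cmult_indicator) measurable
    finally show "(\<integral>\<^sup>+z. indicator {0..<f z} r \<partial>D) = indicator {0..} r * emeasure D {z\<in>space D. r < f z}" .
  qed
  finally show ?thesis .
qed

lemma layer_mono:
  fixes f1 f2 :: "'a \<Rightarrow> real"
  assumes D: "prob_space D" and f1: "f1 \<in> borel_measurable D" and f2: "f2 \<in> borel_measurable D"
    and b1: "\<forall>z\<in>space D. 0 \<le> f1 z \<and> f1 z \<le> 1" and b2: "\<forall>z\<in>space D. 0 \<le> f2 z \<and> f2 z \<le> 1"
    and le: "\<And>r. 0 \<le> r \<Longrightarrow> measure D {z\<in>space D. r < f1 z} \<le> measure D {z\<in>space D. r < f2 z}"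
  shows "integral\<^sup>L D f1 \<le> integral\<^sup>L D f2"
proof -
  interpret prob_space D by fact
  have i1: "integrable D f1"
  proof (rule finite_measure.integrable_const_bound[where B=1])
    show "finite_measure D" by unfold_locales
    show "AE x in D. norm (f1 x) \<le> 1" using b1 by (intro AE_I2) auto
  qed (rule f1)
  have i2: "integrable D f2"
  proof (rule finite_measure.integrable_const_bound[where B=1])
    show "finite_measure D" by unfold_locales
    show "AE x in D. norm (f2 x) \<le> 1" using b2 by (intro AE_I2) auto
  qed (rule f2)
  have "ennreal (integral\<^sup>L D f1) = (\<integral>\<^sup>+z. ennreal (f1 z) \<partial>D)"
    using i1 b1 by (intro nn_integral_eq_integral[symmetric]) (auto intro: AE_I2)
  also have "\<dots> = (\<integral>\<^sup>+r. indicator {0..} r * emeasure D {z\<in>space D. r < f1 z} \<partial>lborel)"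
    using layer_cake_nn[OF D f1] b1 by simp
  also have "\<dots> \<le> (\<integral>\<^sup>+r. indicator {0..} r * emeasure D {z\<in>space D. r < f2 z} \<partial>lborel)"
  proof (intro nn_integral_mono)
    fix r :: real
    show "indicator {0..} r * emeasure D {z\<in>space D. r < f1 z} \<le> indicator {0..} r * emeasure D {z\<in>space D. r < f2 z}"
    proof (cases "0 \<le> r")
      case True
      then show ?thesis using le[OF True] by (simp add: emeasure_eq_measure)
    qed simp
  qed
  also have "\<dots> = (\<integral>\<^sup>+z. ennreal (f2 z) \<partial>D)"
    using layer_cake_nn[OF D f2] b2 by simp
  also have "\<dots> = ennreal (integral\<^sup>L D f2)"
    using i2 b2 by (intro nn_integral_eq_integral) (auto intro: AE_I2)
  finally show ?thesis
    using i2 b2 by (simp add: ennreal_le_iff integral_nonneg)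
qed


lemma bnd_int:
  fixes f :: "'a \<Rightarrow> real"
  assumes D: "prob_space D" and f: "f \<in> borel_measurable D" and b: "\<forall>z\<in>space D. \<bar>f z\<bar> \<le> B"
  shows "integrable D f"
proof -
  interpret prob_space D by fact
  show ?thesis
  proof (rule finite_measure.integrable_const_bound[where B=B])
    show "finite_measure D" by unfold_locales
    show "AE x in D. norm (f x) \<le> B" using b by (intro AE_I2) auto
  qed (rule f)
qed

lemma PhiW_mono: "0 \<le> v \<Longrightarrow> v \<le> w \<Longrightarrow> PhiW u0 v \<le> PhiW u0 w"
  unfolding PhiW_def by auto

lemma PhiW_meas[measurable]: "PhiW u0 \<in> borel_measurable borel"
  unfolding PhiW_def by measurable

lemma Fc_meas:
  assumes D: "prob_space D" and g: "g \<in> borel_measurable D"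
  shows "(\<lambda>z. Fc D g (g z)) \<in> borel_measurable D"
proof -
  interpret prob_space D by fact
  have ms: "\<And>t. {z\<in>space D. g z \<le> t} \<in> sets D" using g by measurable
  have "mono (Fc D g)" unfolding Fc_def mono_def
    by (auto intro!: finite_measure_mono ms)
  then have "Fc D g \<in> borel_measurable borel" using borel_measurable_mono by blast
  then show ?thesis using measurable_compose[OF g] by blast
qed

lemma Fc_bounds:
  assumes D: "prob_space D"
  shows "0 \<le> Fc D g t" "Fc D g t \<le> 1"
proof -
  interpret prob_space D by fact
  show "0 \<le> Fc D g t" "Fc D g t \<le> 1" unfolding Fc_def by auto
qed

lemma level_measure:
  assumes D: "prob_space D" and g: "g \<in> borel_measurable D"
    and at: "\<forall>t. measure D {z \<in> space D. g z = t} = 0"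
    and u0: "0 < u0" "u0 < 1" and r: "0 \<le> r"
  shows "measure D {z \<in> space D. r < PhiW u0 (Fc D g (g z))} = (if r < 1 then 1 - max r (1 - u0) else 0)"
proof -
  interpret prob_space D by fact
  note B = Fc_bounds[OF D]
  show ?thesis
  proof (cases "r < 1")
    case False
    have "\<not> r < PhiW u0 (Fc D g (g z))" for z
    proof -
      have "Fc D g (g z) \<le> 1" by (rule B(2))
      then show ?thesis using False by (simp add: PhiW_def)
    qed
    then have E: "{z \<in> space D. r < PhiW u0 (Fc D g (g z))} = {}" by auto
    show ?thesis unfolding E using False by simp
  next
    case True
    define a where "a = max r (1 - u0)"
    have a: "0 < a" "a < 1" using True u0 r a_def by auto
    have eq: "{z \<in> space D. r < PhiW u0 (Fc D g (g z))} = space D - {z \<in> space D. Fc D g (g z) \<le> a}"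
      using r by (auto simp: PhiW_def a_def)
    have m: "{z \<in> space D. Fc D g (g z) \<le> a} \<in> sets D"
      using Fc_meas[OF D g] by measurable
    show ?thesis unfolding eq using prob_compl[OF m] Fc_uniform[OF D g at a] True a_def by simp
  qed
qed


lemma thresh:
  fixes \<psi> :: "real \<Rightarrow> real"
  assumes mono: "\<And>x y. x \<le> y \<Longrightarrow> \<psi> x \<le> \<psi> y" and neg: "\<And>t. t < 0 \<Longrightarrow> \<psi> t \<le> r"
  shows "\<exists>c. \<forall>t. 0 \<le> t \<and> t \<le> 1 \<longrightarrow> (r < \<psi> t \<longrightarrow> c \<le> t) \<and> (\<not> r < \<psi> t \<longrightarrow> t \<le> c)"
proof (cases "\<exists>t. r < \<psi> t")
  case False
  then have "\<forall>t. 0 \<le> t \<and> t \<le> 1 \<longrightarrow> (r < \<psi> t \<longrightarrow> 1 \<le> t) \<and> (\<not> r < \<psi> t \<longrightarrow> t \<le> 1)"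
    by simp
  then show ?thesis by blast
next
  case True
  define S where "S = {t. r < \<psi> t}"
  have ne: "S \<noteq> {}" using True S_def by simp
  have bdd: "bdd_below S"
  proof (rule bdd_belowI[of _ 0])
    fix t assume "t \<in> S" then have rt: "r < \<psi> t" by (simp add: S_def)
    show "0 \<le> t"
    proof (rule ccontr)
      assume "\<not> 0 \<le> t" then have "\<psi> t \<le> r" using neg by simp
      then show False using rt by simp
    qed
  qed
  have "\<forall>t. 0 \<le> t \<and> t \<le> 1 \<longrightarrow> (r < \<psi> t \<longrightarrow> Inf S \<le> t) \<and> (\<not> r < \<psi> t \<longrightarrow> t \<le> Inf S)"
  proof (intro allI impI conjI)
    fix t assume "r < \<psi> t" then have "t \<in> S" by (simp add: S_def)
    then show "Inf S \<le> t" using bdd by (rule cInf_lower)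
  next
    fix t assume n: "\<not> r < \<psi> t"
    show "t \<le> Inf S"
    proof (rule ccontr)
      assume "\<not> t \<le> Inf S"
      then have "Inf S < t" by simp
      from cInf_lessD[OF ne this] obtain x where x: "x \<in> S" "x < t" by blast
      have "r < \<psi> x" using x(1) by (simp add: S_def)
      also have "\<psi> x \<le> \<psi> t" using mono x(2) by simp
      finally show False using n by simp
    qed
  qed
  then show ?thesis by blast
qed

lemma np:
  fixes e :: "'a \<Rightarrow> real"
  assumes D: "prob_space D" and e: "e \<in> borel_measurable D" and eb: "\<forall>z\<in>space D. 0 \<le> e z \<and> e z \<le> 1"
    and G: "G \<in> sets D" and H: "H \<in> sets D" and eq: "measure D G = measure D H"
    and c: "\<forall>z\<in>space D. (z \<in> H \<longrightarrow> c \<le> e z) \<and> (z \<notin> H \<longrightarrow> e z \<le> c)"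
  shows "(\<integral>z. e z * indicator G z \<partial>D) \<le> (\<integral>z. e z * indicator H z \<partial>D)"
proof -
  interpret prob_space D by fact
  have iG: "integrable D (\<lambda>z. e z * indicator G z)"
    by (rule bnd_int[OF D, where B=1]) (use e G eb in \<open>auto simp: indicator_def\<close>)
  have iH: "integrable D (\<lambda>z. e z * indicator H z)"
    by (rule bnd_int[OF D, where B=1]) (use e H eb in \<open>auto simp: indicator_def\<close>)
  have iG': "integrable D (\<lambda>z. indicator G z :: real)"
    by (rule integrable_real_indicator[OF G]) (simp add: emeasure_eq_measure)
  have iH': "integrable D (\<lambda>z. indicator H z :: real)"
    by (rule integrable_real_indicator[OF H]) (simp add: emeasure_eq_measure)
  have "(\<integral>z. e z * indicator G z \<partial>D) \<le> (\<integral>z. e z * indicator H z + c * (indicator G z - indicator H z) \<partial>D)"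
  proof (rule integral_mono)
    show "integrable D (\<lambda>z. e z * indicator H z + c * (indicator G z - indicator H z))"
      using iH iG' iH' by auto
    fix z assume z: "z \<in> space D"
    have cz: "(z \<in> H \<longrightarrow> c \<le> e z) \<and> (z \<notin> H \<longrightarrow> e z \<le> c)" using c z by blast
    show "e z * indicator G z \<le> e z * indicator H z + c * (indicator G z - indicator H z)"
      using cz by (cases "z \<in> G"; cases "z \<in> H") simp_all
  qed (rule iG)
  also have "\<dots> = (\<integral>z. e z * indicator H z \<partial>D) + c * (measure D G - measure D H)"
    using iH iG' iH' G H by (simp add: integral_add integral_diff)
  finally show ?thesis using eq by simp
qed


lemma Fc_mono:
  assumes D: "prob_space D" and g: "g \<in> borel_measurable D"
  shows "x \<le> y \<Longrightarrow> Fc D g x \<le> Fc D g y"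
proof -
  interpret prob_space D by fact
  have ms: "\<And>t. {z\<in>space D. g z \<le> t} \<in> sets D" using g by measurable
  assume "x \<le> y" then show ?thesis unfolding Fc_def
    by (auto intro!: finite_measure_mono ms)
qed

lemma part1_gen:
  fixes g e lab :: "'a \<Rightarrow> real"
  assumes D: "prob_space D" and lab: "lab \<in> borel_measurable D"
    and g: "g \<in> borel_measurable D" and e: "e \<in> borel_measurable D"
    and eb: "\<forall>z\<in>space D. 0 \<le> e z \<and> e z \<le> 1"
    and atg: "\<forall>t. measure D {z \<in> space D. g z = t} = 0"
    and ate: "\<forall>t. measure D {z \<in> space D. e z = t} = 0"
    and u0: "0 < u0" "u0 < 1"
    and hg: "\<forall>r. measure D ({z\<in>space D. r < PhiW u0 (Fc D g (g z))} \<inter> {z\<in>space D. lab z = 1})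
               = (\<integral>z. e z * indicator {z\<in>space D. r < PhiW u0 (Fc D g (g z))} z \<partial>D)"
    and he: "\<forall>r. measure D ({z\<in>space D. r < PhiW u0 (Fc D e (e z))} \<inter> {z\<in>space D. lab z = 1})
               = (\<integral>z. e z * indicator {z\<in>space D. r < PhiW u0 (Fc D e (e z))} z \<partial>D)"
  shows "(\<integral>z. PhiW u0 (Fc D g (g z)) * indicator {z\<in>space D. lab z = 1} z \<partial>D)
       \<le> (\<integral>z. PhiW u0 (Fc D e (e z)) * indicator {z\<in>space D. lab z = 1} z \<partial>D)"
proof -
  interpret prob_space D by fact
  define L where "L = {z\<in>space D. lab z = 1}"
  have L: "L \<in> sets D" unfolding L_def using lab by measurable
  have Fg: "(\<lambda>z. Fc D g (g z)) \<in> borel_measurable D" by (rule Fc_meas[OF D g])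
  have Fe: "(\<lambda>z. Fc D e (e z)) \<in> borel_measurable D" by (rule Fc_meas[OF D e])
  have Pb: "0 \<le> PhiW u0 (Fc D h t) \<and> PhiW u0 (Fc D h t) \<le> 1" for h :: "'a \<Rightarrow> real" and t
    using Fc_bounds[OF D, of h t] u0 by (auto simp: PhiW_def)
  have Gs: "{z\<in>space D. r < PhiW u0 (Fc D g (g z))} \<in> sets D" for r using Fg by measurable
  have Hs: "{z\<in>space D. r < PhiW u0 (Fc D e (e z))} \<in> sets D" for r using Fe by measurable
  show ?thesis unfolding L_def[symmetric]
  proof (rule layer_mono[OF D])
    show "(\<lambda>z. PhiW u0 (Fc D g (g z)) * indicator L z) \<in> borel_measurable D" using Fg L by measurable
    show "(\<lambda>z. PhiW u0 (Fc D e (e z)) * indicator L z) \<in> borel_measurable D" using Fe L by measurable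
    show "\<forall>z\<in>space D. 0 \<le> PhiW u0 (Fc D g (g z)) * indicator L z \<and> PhiW u0 (Fc D g (g z)) * indicator L z \<le> 1"
      using Pb by (auto simp: indicator_def)
    show "\<forall>z\<in>space D. 0 \<le> PhiW u0 (Fc D e (e z)) * indicator L z \<and> PhiW u0 (Fc D e (e z)) * indicator L z \<le> 1"
      using Pb by (auto simp: indicator_def)
    fix r :: real assume r: "0 \<le> r"
    have s1: "{z\<in>space D. r < PhiW u0 (Fc D g (g z)) * indicator L z} = {z\<in>space D. r < PhiW u0 (Fc D g (g z))} \<inter> L"
      using r by (auto simp: indicator_def L_def)
    have s2: "{z\<in>space D. r < PhiW u0 (Fc D e (e z)) * indicator L z} = {z\<in>space D. r < PhiW u0 (Fc D e (e z))} \<inter> L"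
      using r by (auto simp: indicator_def L_def)
    define \<psi> where "\<psi> = (\<lambda>t. PhiW u0 (Fc D e t))"
    have \<psi>m: "\<psi> x \<le> \<psi> y" if "x \<le> y" for x y
      unfolding \<psi>_def using PhiW_mono Fc_bounds[OF D] Fc_mono[OF D e that] by blast
    have \<psi>n: "\<psi> t \<le> r" if "t < 0" for t
    proof -
      have E: "{z \<in> space D. e z \<le> t} = {}" using eb that by force
      have "Fc D e t = 0" unfolding Fc_def E by simp
      then show ?thesis using r by (simp add: \<psi>_def PhiW_def)
    qed
    obtain c where c: "\<forall>t. 0 \<le> t \<and> t \<le> 1 \<longrightarrow> (r < \<psi> t \<longrightarrow> c \<le> t) \<and> (\<not> r < \<psi> t \<longrightarrow> t \<le> c)"
      using thresh[of \<psi> r, OF \<psi>m \<psi>n] by blast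
    have "measure D {z\<in>space D. r < PhiW u0 (Fc D g (g z)) * indicator L z}
        = (\<integral>z. e z * indicator {z\<in>space D. r < PhiW u0 (Fc D g (g z))} z \<partial>D)"
      unfolding s1 using hg L_def by simp
    also have "\<dots> \<le> (\<integral>z. e z * indicator {z\<in>space D. r < PhiW u0 (Fc D e (e z))} z \<partial>D)"
    proof (rule np[OF D e eb Gs Hs])
      show "measure D {z\<in>space D. r < PhiW u0 (Fc D g (g z))} = measure D {z\<in>space D. r < PhiW u0 (Fc D e (e z))}"
        using level_measure[OF D g atg u0 r] level_measure[OF D e ate u0 r] by simp
      show "\<forall>z\<in>space D. (z \<in> {z\<in>space D. r < PhiW u0 (Fc D e (e z))} \<longrightarrow> c \<le> e z) \<and>
          (z \<notin> {z\<in>space D. r < PhiW u0 (Fc D e (e z))} \<longrightarrow> e z \<le> c)"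
      proof
        fix z assume z: "z \<in> space D"
        then have "0 \<le> e z \<and> e z \<le> 1" using eb by blast
        then have "(r < \<psi> (e z) \<longrightarrow> c \<le> e z) \<and> (\<not> r < \<psi> (e z) \<longrightarrow> e z \<le> c)" using c by blast
        then show "(z \<in> {z\<in>space D. r < PhiW u0 (Fc D e (e z))} \<longrightarrow> c \<le> e z) \<and>
          (z \<notin> {z\<in>space D. r < PhiW u0 (Fc D e (e z))} \<longrightarrow> e z \<le> c)" using z by (simp add: \<psi>_def)
      qed
    qed
    also have "\<dots> = measure D {z\<in>space D. r < PhiW u0 (Fc D e (e z)) * indicator L z}"
      unfolding s2 using he L_def by simp
    finally show "measure D {z\<in>space D. r < PhiW u0 (Fc D g (g z)) * indicator L z}
        \<le> measure D {z\<in>space D. r < PhiW u0 (Fc D e (e z)) * indicator L z}" .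
  qed
qed


lemma FR:
  assumes D: "prob_space D"
    and E: "{p\<in>space (D \<Otimes>\<^sub>M D). P (fst p) (snd p)} \<in> sets (D \<Otimes>\<^sub>M D)"
  shows "(\<lambda>z. measure D {z'\<in>space D. P z z'}) \<in> borel_measurable D"
    "measure (D \<Otimes>\<^sub>M D) {p\<in>space (D \<Otimes>\<^sub>M D). P (fst p) (snd p)} = (\<integral>z. measure D {z'\<in>space D. P z z'} \<partial>D)"
proof -
  interpret prob_space D by fact
  interpret PP: pair_prob_space D D by unfold_locales
  define E' where "E' = {p\<in>space (D \<Otimes>\<^sub>M D). P (fst p) (snd p)}"
  have pre: "Pair z -` E' = {z'\<in>space D. P z z'}" if "z \<in> space D" for z
    using that by (auto simp: E'_def space_pair_measure)
  have m0: "(\<lambda>z. emeasure D (Pair z -` E')) \<in> borel_measurable D"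
    using measurable_emeasure_Pair[OF E[folded E'_def]] .
  have m1: "(\<lambda>z. enn2real (emeasure D (Pair z -` E'))) \<in> borel_measurable D"
    using m0 by measurable
  show m: "(\<lambda>z. measure D {z'\<in>space D. P z z'}) \<in> borel_measurable D"
    by (rule measurable_cong[THEN iffD1, OF _ m1]) (simp add: pre measure_def)
  have i: "integrable D (\<lambda>z. measure D {z'\<in>space D. P z z'})"
    by (rule bnd_int[OF D m, where B=1]) simp
  have "ennreal (measure (D \<Otimes>\<^sub>M D) E') = emeasure (D \<Otimes>\<^sub>M D) E'"
    by (simp add: PP.emeasure_eq_measure)
  also have "\<dots> = (\<integral>\<^sup>+z. emeasure D (Pair z -` E') \<partial>D)"
    by (rule emeasure_pair_measure_alt[OF E[folded E'_def]])
  also have "\<dots> = (\<integral>\<^sup>+z. ennreal (measure D {z'\<in>space D. P z z'}) \<partial>D)"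
    by (intro nn_integral_cong) (simp add: pre emeasure_eq_measure)
  also have "\<dots> = ennreal (\<integral>z. measure D {z'\<in>space D. P z z'} \<partial>D)"
    by (intro nn_integral_eq_integral i) simp
  finally show "measure (D \<Otimes>\<^sub>M D) {p\<in>space (D \<Otimes>\<^sub>M D). P (fst p) (snd p)} = (\<integral>z. measure D {z'\<in>space D. P z z'} \<partial>D)"
    unfolding E'_def by (simp add: integral_nonneg)
qed


lemma msplit:
  assumes D: "prob_space D" and P: "{z\<in>space D. P z} \<in> sets D" and Q: "{z\<in>space D. Q z} \<in> sets D"
  shows "measure D {z\<in>space D. P z} = measure D {z\<in>space D. P z \<and> Q z} + measure D {z\<in>space D. P z \<and> \<not> Q z}"
proof -
  interpret prob_space D by fact
  have e: "{z\<in>space D. P z} = {z\<in>space D. P z \<and> Q z} \<union> {z\<in>space D. P z \<and> \<not> Q z}" by auto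
  have s1: "{z\<in>space D. P z \<and> Q z} \<in> sets D"
  proof -
    have "{z\<in>space D. P z \<and> Q z} = {z\<in>space D. P z} \<inter> {z\<in>space D. Q z}" by auto
    then show ?thesis using P Q by auto
  qed
  have s2: "{z\<in>space D. P z \<and> \<not> Q z} \<in> sets D"
  proof -
    have "{z\<in>space D. P z \<and> \<not> Q z} = {z\<in>space D. P z} - {z\<in>space D. Q z}" by auto
    then show ?thesis using P Q by auto
  qed
  show ?thesis by (subst e, rule finite_measure_Union[OF s1 s2]) auto
qed

lemma mnull:
  assumes D: "prob_space D" and Q: "{z\<in>space D. Q z} \<in> sets D" and z: "measure D {z\<in>space D. Q z} = 0"
    and P: "{z\<in>space D. P z} \<in> sets D" and imp: "\<And>z. z \<in> space D \<Longrightarrow> P z \<Longrightarrow> Q z"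
  shows "measure D {z\<in>space D. P z} = 0"
proof -
  interpret prob_space D by fact
  have "measure D {z\<in>space D. P z} \<le> measure D {z\<in>space D. Q z}"
    using imp by (intro finite_measure_mono Q) auto
  then show ?thesis using z by (simp add: measure_nonneg antisym)
qed

lemma swapM:
  assumes D: "prob_space D"
    and E: "{p\<in>space (D \<Otimes>\<^sub>M D). Q (fst p) (snd p)} \<in> sets (D \<Otimes>\<^sub>M D)"
  shows "measure (D \<Otimes>\<^sub>M D) {p\<in>space (D \<Otimes>\<^sub>M D). Q (fst p) (snd p)}
       = measure (D \<Otimes>\<^sub>M D) {p\<in>space (D \<Otimes>\<^sub>M D). Q (snd p) (fst p)}"
proof -
  interpret prob_space D by fact
  interpret PP: pair_prob_space D D by unfold_locales
  define E1 where "E1 = {p\<in>space (D \<Otimes>\<^sub>M D). Q (fst p) (snd p)}"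
  have "measure (D \<Otimes>\<^sub>M D) E1 = measure (distr (D \<Otimes>\<^sub>M D) (D \<Otimes>\<^sub>M D) (\<lambda>(x,y). (y,x))) E1"
    using PP.distr_pair_swap by (rule arg_cong[where f="\<lambda>M. measure M E1"])
  also have "\<dots> = measure (D \<Otimes>\<^sub>M D) ((\<lambda>(x,y). (y,x)) -` E1 \<inter> space (D \<Otimes>\<^sub>M D))"
    by (rule measure_distr) (auto simp: E1_def E)
  also have "(\<lambda>(x,y). (y,x)) -` E1 \<inter> space (D \<Otimes>\<^sub>M D) = {p\<in>space (D \<Otimes>\<^sub>M D). Q (snd p) (fst p)}"
    by (auto simp: E1_def space_pair_measure)
  finally show ?thesis unfolding E1_def .
qed


lemma meq_ae:
  assumes D: "prob_space D" and P: "{z\<in>space D. P z} \<in> sets D" and Q: "{z\<in>space D. Q z} \<in> sets D"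
    and N: "{z\<in>space D. N z} \<in> sets D" and N0: "measure D {z\<in>space D. N z} = 0"
    and eq: "\<And>z. z \<in> space D \<Longrightarrow> \<not> N z \<Longrightarrow> P z \<longleftrightarrow> Q z"
  shows "measure D {z\<in>space D. P z} = measure D {z\<in>space D. Q z}"
proof -
  have sP: "{z\<in>space D. P z \<and> N z} \<in> sets D"
  proof -
    have "{z\<in>space D. P z \<and> N z} = {z\<in>space D. P z} \<inter> {z\<in>space D. N z}" by auto
    then show ?thesis using P N by auto
  qed
  have sQ: "{z\<in>space D. Q z \<and> N z} \<in> sets D"
  proof -
    have "{z\<in>space D. Q z \<and> N z} = {z\<in>space D. Q z} \<inter> {z\<in>space D. N z}" by auto
    then show ?thesis using Q N by auto
  qed
  have "measure D {z\<in>space D. P z} = measure D {z\<in>space D. P z \<and> N z} + measure D {z\<in>space D. P z \<and> \<not> N z}"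
    by (rule msplit[OF D P N])
  also have "measure D {z\<in>space D. P z \<and> N z} = 0" by (rule mnull[OF D N N0 sP]) simp
  also have "{z\<in>space D. P z \<and> \<not> N z} = {z\<in>space D. Q z \<and> \<not> N z}" using eq by auto
  also have "measure D {z\<in>space D. Q z \<and> \<not> N z} = measure D {z\<in>space D. Q z \<and> N z} + measure D {z\<in>space D. Q z \<and> \<not> N z}"
    using mnull[OF D N N0 sQ] by simp
  also have "\<dots> = measure D {z\<in>space D. Q z}"
    by (rule msplit[OF D Q N, symmetric])
  finally show ?thesis by simp
qed

lemma mnull_or:
  assumes D: "prob_space D" and A: "{z\<in>space D. A z} \<in> sets D" and B: "{z\<in>space D. B z} \<in> sets D"
    and A0: "measure D {z\<in>space D. A z} = 0" and B0: "measure D {z\<in>space D. B z} = 0"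
  shows "measure D {z\<in>space D. A z \<or> B z} = 0"
proof -
  interpret prob_space D by fact
  have e: "{z\<in>space D. A z \<or> B z} = {z\<in>space D. A z} \<union> {z\<in>space D. B z}" by auto
  have "measure D {z\<in>space D. A z \<or> B z} \<le> measure D {z\<in>space D. A z} + measure D {z\<in>space D. B z}"
    unfolding e by (rule measure_Un_le[OF A B])
  then show ?thesis using A0 B0 by (simp add: measure_nonneg antisym)
qed

lemma part2_gen:
  fixes g lab :: "'a \<Rightarrow> real"
  assumes D: "prob_space D" and g[measurable]: "g \<in> borel_measurable D" and lab[measurable]: "lab \<in> borel_measurable D"
    and atg: "\<forall>t. measure D {z \<in> space D. g z = t} = 0"
    and labs: "measure D {z\<in>space D. lab z \<noteq> 1 \<and> lab z \<noteq> -1} = 0"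
    and u0: "0 < u0" "u0 < 1"
    and T_def: "T = Inf {t. 1 - u0 \<le> Fc D g t}"
  shows "(\<integral>z. PhiW u0 (Fc D g (g z)) * indicator {z\<in>space D. lab z = 1} z \<partial>D)
    = measure D {z\<in>space D. T \<le> g z \<and> lab z = 1} * measure D {z\<in>space D. lab z = 1}
      - (measure D {z\<in>space D. T \<le> g z \<and> lab z = 1})\<^sup>2 / 2
      + measure (D \<Otimes>\<^sub>M D) {p\<in>space (D \<Otimes>\<^sub>M D). g (snd p) < g (fst p) \<and> T \<le> g (fst p) \<and> lab (fst p) = 1 \<and> lab (snd p) = -1}"
proof -
  interpret prob_space D by fact
  define a where "a = 1 - u0"
  have a: "0 < a" "a < 1" using u0 a_def by auto
  have T: "T = Inf {t. a \<le> Fc D g t}" using T_def a_def by simp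
  note Q = Fc_quantile[OF D g atg a, folded T]
  have Um[measurable]: "(\<lambda>z. Fc D g (g z)) \<in> borel_measurable D" by (rule Fc_meas[OF D g])
  define L where "L = {z\<in>space D. lab z = 1}"
  define A where "A = {z\<in>space D. T \<le> g z \<and> lab z = 1}"
  have L[measurable]: "L \<in> sets D" unfolding L_def by measurable
  have A[measurable]: "A \<in> sets D" unfolding A_def by measurable
  define p where "p = measure D L"
  define b where "b = measure D A"
  define V1 where "V1 = (\<lambda>z. measure D {z'\<in>space D. g z' < g z \<and> lab z' = 1})"
  define V2 where "V2 = (\<lambda>z. measure D {z'\<in>space D. g z' < g z \<and> lab z' = -1})"
  define W1 where "W1 = (\<lambda>z. measure D {z'\<in>space D. T \<le> g z' \<and> lab z' = 1 \<and> g z' < g z})"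
  define W1' where "W1' = (\<lambda>z. measure D {z'\<in>space D. T \<le> g z' \<and> lab z' = 1 \<and> g z < g z'})"
  define Loc where "Loc = measure (D \<Otimes>\<^sub>M D) {p\<in>space (D \<Otimes>\<^sub>M D). g (snd p) < g (fst p) \<and> T \<le> g (fst p) \<and> lab (fst p) = 1 \<and> lab (snd p) = -1}"
  have V1m[measurable]: "V1 \<in> borel_measurable D" unfolding V1_def
    by (rule FR(1)[OF D, where P="\<lambda>z z'. g z' < g z \<and> lab z' = 1"]) measurable
  have V2m[measurable]: "V2 \<in> borel_measurable D" unfolding V2_def
    by (rule FR(1)[OF D, where P="\<lambda>z z'. g z' < g z \<and> lab z' = -1"]) measurable
  have W1m[measurable]: "W1 \<in> borel_measurable D" unfolding W1_def
    by (rule FR(1)[OF D, where P="\<lambda>z z'. T \<le> g z' \<and> lab z' = 1 \<and> g z' < g z"]) measurable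
  have W1'm[measurable]: "W1' \<in> borel_measurable D" unfolding W1'_def
    by (rule FR(1)[OF D, where P="\<lambda>z z'. T \<le> g z' \<and> lab z' = 1 \<and> g z < g z'"]) measurable
  have intA: "integrable D (\<lambda>z. f z * indicator A z)" if "f \<in> borel_measurable D" "\<And>z. 0 \<le> f z \<and> f z \<le> 1" for f :: "'a \<Rightarrow> real"
    by (rule bnd_int[OF D, where B=1]) (use that in \<open>auto simp: indicator_def abs_le_iff\<close>)
  have S1: "(\<integral>z. PhiW u0 (Fc D g (g z)) * indicator L z \<partial>D) = (\<integral>z. Fc D g (g z) * indicator A z \<partial>D)"
  proof (rule integral_cong_AE)
    show "(\<lambda>z. PhiW u0 (Fc D g (g z)) * indicator L z) \<in> borel_measurable D" by measurable
    show "(\<lambda>z. Fc D g (g z) * indicator A z) \<in> borel_measurable D" by measurable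
    define N0 where "N0 = {z \<in> space D. T \<le> g z \<and> Fc D g (g z) \<le> a}"
    have N0s: "N0 \<in> sets D" unfolding N0_def by measurable
    have "N0 \<in> null_sets D" using Q(3) N0s by (intro null_setsI) (simp_all add: emeasure_eq_measure N0_def)
    then show "AE z in D. PhiW u0 (Fc D g (g z)) * indicator L z = Fc D g (g z) * indicator A z"
    proof (rule AE_I')
      show "{z \<in> space D. \<not> PhiW u0 (Fc D g (g z)) * indicator L z = Fc D g (g z) * indicator A z} \<subseteq> N0"
      proof (rule subsetI, rule ccontr)
        fix z assume z: "z \<in> {z \<in> space D. \<not> PhiW u0 (Fc D g (g z)) * indicator L z = Fc D g (g z) * indicator A z}"
          and nz: "z \<notin> N0"
        show False
        proof (cases "a < Fc D g (g z)")
          case True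
          then have "T \<le> g z" using Q(2) by simp
          then show False using z True by (simp add: PhiW_def a_def L_def A_def indicator_def)
        next
          case False
          then have "\<not> T \<le> g z" using nz z by (simp add: N0_def)
          then show False using z False by (simp add: PhiW_def a_def L_def A_def indicator_def)
        qed
      qed
    qed
  qed
  have S2: "Fc D g (g z) = V1 z + V2 z" for z
  proof -
    define t where "t = g z"
    have "Fc D g t = measure D {z'\<in>space D. g z' \<le> t \<and> lab z' = 1} + measure D {z'\<in>space D. g z' \<le> t \<and> \<not> lab z' = 1}"
      unfolding Fc_def by (rule msplit[OF D]) measurable
    also have "measure D {z'\<in>space D. g z' \<le> t \<and> lab z' = 1} = measure D {z'\<in>space D. g z' < t \<and> lab z' = 1}"
      by (rule meq_ae[OF D, where N="\<lambda>z'. g z' = t"]) (use atg in \<open>auto\<close>)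
    also have "measure D {z'\<in>space D. g z' \<le> t \<and> \<not> lab z' = 1} = measure D {z'\<in>space D. g z' < t \<and> lab z' = -1}"
    proof (rule meq_ae[OF D, where N="\<lambda>z'. g z' = t \<or> (lab z' \<noteq> 1 \<and> lab z' \<noteq> -1)"])
      show "measure D {z'\<in>space D. g z' = t \<or> (lab z' \<noteq> 1 \<and> lab z' \<noteq> -1)} = 0"
        by (rule mnull_or[OF D]) (use atg labs in \<open>auto\<close>)
    qed auto
    finally show ?thesis by (simp add: t_def V1_def V2_def)
  qed
  have S3: "(\<integral>z. V2 z * indicator A z \<partial>D) = Loc"
  proof -
    have "Loc = (\<integral>z. measure D {z'\<in>space D. g z' < g z \<and> T \<le> g z \<and> lab z = 1 \<and> lab z' = -1} \<partial>D)"
      unfolding Loc_def by (rule FR(2)[OF D, where P="\<lambda>z z'. g z' < g z \<and> T \<le> g z \<and> lab z = 1 \<and> lab z' = -1"]) measurable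
    also have "\<dots> = (\<integral>z. V2 z * indicator A z \<partial>D)"
    proof (intro Bochner_Integration.integral_cong refl)
      fix z assume z: "z \<in> space D"
      show "measure D {z'\<in>space D. g z' < g z \<and> T \<le> g z \<and> lab z = 1 \<and> lab z' = -1} = V2 z * indicator A z"
        using z by (cases "T \<le> g z \<and> lab z = 1") (auto simp: V2_def A_def)
    qed
    finally show ?thesis by simp
  qed
  have S4: "V1 z * indicator A z = (p - b) * indicator A z + W1 z * indicator A z" for z
  proof (cases "z \<in> A")
    case True
    then have zA: "T \<le> g z" "lab z = 1" by (auto simp: A_def)
    have "V1 z = measure D {z'\<in>space D. (g z' < g z \<and> lab z' = 1) \<and> T \<le> g z'} + measure D {z'\<in>space D. (g z' < g z \<and> lab z' = 1) \<and> \<not> T \<le> g z'}"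
      unfolding V1_def by (rule msplit[OF D]) measurable
    also have "{z'\<in>space D. (g z' < g z \<and> lab z' = 1) \<and> T \<le> g z'} = {z'\<in>space D. T \<le> g z' \<and> lab z' = 1 \<and> g z' < g z}"
      by auto
    also have "{z'\<in>space D. (g z' < g z \<and> lab z' = 1) \<and> \<not> T \<le> g z'} = {z'\<in>space D. lab z' = 1 \<and> \<not> T \<le> g z'}"
      using zA by auto
    also have "p = measure D {z'\<in>space D. lab z' = 1 \<and> T \<le> g z'} + measure D {z'\<in>space D. lab z' = 1 \<and> \<not> T \<le> g z'}"
      unfolding p_def L_def by (rule msplit[OF D]) measurable
    moreover have "{z'\<in>space D. lab z' = 1 \<and> T \<le> g z'} = A" by (auto simp: A_def)
    ultimately show ?thesis using True by (simp add: W1_def b_def)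
  qed simp
  have S5: "(\<integral>z. W1 z * indicator A z \<partial>D) = (\<integral>z. W1' z * indicator A z \<partial>D)"
  proof -
    have "(\<integral>z. W1 z * indicator A z \<partial>D) = (\<integral>z. measure D {z'\<in>space D. (T \<le> g z \<and> lab z = 1) \<and> T \<le> g z' \<and> lab z' = 1 \<and> g z' < g z} \<partial>D)"
    proof (intro Bochner_Integration.integral_cong refl)
      fix z assume z: "z \<in> space D"
      show "W1 z * indicator A z = measure D {z'\<in>space D. (T \<le> g z \<and> lab z = 1) \<and> T \<le> g z' \<and> lab z' = 1 \<and> g z' < g z}"
        using z by (cases "T \<le> g z \<and> lab z = 1") (auto simp: W1_def A_def)
    qed
    also have "\<dots> = measure (D \<Otimes>\<^sub>M D) {p\<in>space (D \<Otimes>\<^sub>M D). (T \<le> g (fst p) \<and> lab (fst p) = 1) \<and> T \<le> g (snd p) \<and> lab (snd p) = 1 \<and> g (snd p) < g (fst p)}"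
      by (rule FR(2)[OF D, where P="\<lambda>z z'. (T \<le> g z \<and> lab z = 1) \<and> T \<le> g z' \<and> lab z' = 1 \<and> g z' < g z", symmetric]) measurable
    also have "\<dots> = measure (D \<Otimes>\<^sub>M D) {p\<in>space (D \<Otimes>\<^sub>M D). (T \<le> g (snd p) \<and> lab (snd p) = 1) \<and> T \<le> g (fst p) \<and> lab (fst p) = 1 \<and> g (fst p) < g (snd p)}"
      by (rule swapM[OF D, where Q="\<lambda>z z'. (T \<le> g z \<and> lab z = 1) \<and> T \<le> g z' \<and> lab z' = 1 \<and> g z' < g z"]) measurable
    also have "{p\<in>space (D \<Otimes>\<^sub>M D). (T \<le> g (snd p) \<and> lab (snd p) = 1) \<and> T \<le> g (fst p) \<and> lab (fst p) = 1 \<and> g (fst p) < g (snd p)}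
        = {p\<in>space (D \<Otimes>\<^sub>M D). (T \<le> g (fst p) \<and> lab (fst p) = 1) \<and> T \<le> g (snd p) \<and> lab (snd p) = 1 \<and> g (fst p) < g (snd p)}"
      by auto
    also have "measure (D \<Otimes>\<^sub>M D) \<dots> = (\<integral>z. measure D {z'\<in>space D. (T \<le> g z \<and> lab z = 1) \<and> T \<le> g z' \<and> lab z' = 1 \<and> g z < g z'} \<partial>D)"
      by (rule FR(2)[OF D, where P="\<lambda>z z'. (T \<le> g z \<and> lab z = 1) \<and> T \<le> g z' \<and> lab z' = 1 \<and> g z < g z'"]) measurable
    also have "\<dots> = (\<integral>z. W1' z * indicator A z \<partial>D)"
    proof (intro Bochner_Integration.integral_cong refl)
      fix z assume z: "z \<in> space D"
      show "measure D {z'\<in>space D. (T \<le> g z \<and> lab z = 1) \<and> T \<le> g z' \<and> lab z' = 1 \<and> g z < g z'} = W1' z * indicator A z"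
        using z by (cases "T \<le> g z \<and> lab z = 1") (auto simp: W1'_def A_def)
    qed
    finally show ?thesis .
  qed
  have S6: "W1 z + W1' z = b" for z
  proof -
    have "b = measure D {z'\<in>space D. (T \<le> g z' \<and> lab z' = 1) \<and> g z' < g z} + measure D {z'\<in>space D. (T \<le> g z' \<and> lab z' = 1) \<and> \<not> g z' < g z}"
      unfolding b_def A_def by (rule msplit[OF D]) measurable
    also have "measure D {z'\<in>space D. (T \<le> g z' \<and> lab z' = 1) \<and> \<not> g z' < g z}
      = measure D {z'\<in>space D. ((T \<le> g z' \<and> lab z' = 1) \<and> \<not> g z' < g z) \<and> g z < g z'} + measure D {z'\<in>space D. ((T \<le> g z' \<and> lab z' = 1) \<and> \<not> g z' < g z) \<and> \<not> g z < g z'}"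
      by (rule msplit[OF D]) measurable
    also have "measure D {z'\<in>space D. ((T \<le> g z' \<and> lab z' = 1) \<and> \<not> g z' < g z) \<and> \<not> g z < g z'} = 0"
      by (rule mnull[OF D, where Q="\<lambda>z'. g z' = g z"]) (use atg in \<open>auto\<close>)
    also have "{z'\<in>space D. ((T \<le> g z' \<and> lab z' = 1) \<and> \<not> g z' < g z) \<and> g z < g z'} = {z'\<in>space D. T \<le> g z' \<and> lab z' = 1 \<and> g z < g z'}"
      by auto
    finally show ?thesis by (simp add: W1_def W1'_def conj_assoc)
  qed
  have iV1: "integrable D (\<lambda>z. V1 z * indicator A z)" by (rule intA) (auto simp: V1_def)
  have iV2: "integrable D (\<lambda>z. V2 z * indicator A z)" by (rule intA) (auto simp: V2_def)
  have iW1: "integrable D (\<lambda>z. W1 z * indicator A z)" by (rule intA) (auto simp: W1_def)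
  have iW1': "integrable D (\<lambda>z. W1' z * indicator A z)" by (rule intA) (auto simp: W1'_def)
  have iA: "integrable D (\<lambda>z. indicator A z :: real)"
    by (rule integrable_real_indicator[OF A]) (simp add: emeasure_eq_measure)
  have K: "(\<integral>z. W1 z * indicator A z \<partial>D) = b\<^sup>2 / 2"
  proof -
    have "(\<integral>z. W1 z * indicator A z \<partial>D) + (\<integral>z. W1' z * indicator A z \<partial>D)
        = (\<integral>z. W1 z * indicator A z + W1' z * indicator A z \<partial>D)"
      using iW1 iW1' by simp
    also have "\<dots> = (\<integral>z. b * indicator A z \<partial>D)"
      by (intro Bochner_Integration.integral_cong refl) (simp add: S6 distrib_right[symmetric])
    also have "\<dots> = b * b" using A by (simp add: b_def)
    finally show ?thesis using S5 by (simp add: power2_eq_square)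
  qed
  have "(\<integral>z. Fc D g (g z) * indicator A z \<partial>D) = (\<integral>z. V1 z * indicator A z + V2 z * indicator A z \<partial>D)"
    by (intro Bochner_Integration.integral_cong refl) (simp add: S2 distrib_right)
  also have "\<dots> = (\<integral>z. V1 z * indicator A z \<partial>D) + Loc"
    using iV1 iV2 S3 by simp
  also have "(\<integral>z. V1 z * indicator A z \<partial>D) = (\<integral>z. (p - b) * indicator A z + W1 z * indicator A z \<partial>D)"
    by (intro Bochner_Integration.integral_cong refl) (rule S4)
  also have "\<dots> = (p - b) * b + b\<^sup>2 / 2"
    using iA iW1 K A by (simp add: b_def)
  finally have X: "(\<integral>z. Fc D g (g z) * indicator A z \<partial>D) = Loc + ((p - b) * b + b\<^sup>2 / 2)" by simp
  show ?thesis
    unfolding L_def[symmetric] A_def[symmetric] b_def[symmetric] p_def[symmetric] Loc_def[symmetric] S1 X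
    by (simp add: power2_eq_square algebra_simps)
qed


theorem theorem4:
  fixes M :: "'w measure" and N :: "'a measure"
    and X X' :: "'w \<Rightarrow> 'a" and Y Y' :: "'w \<Rightarrow> real"
    and eta :: "'a \<Rightarrow> real" and u0 :: real
  assumes "prob_space M"
    and "X \<in> measurable M N" and "X' \<in> measurable M N"
    and "Y \<in> borel_measurable M" and "Y' \<in> borel_measurable M"
    and "\<forall>\<omega> \<in> space M. Y \<omega> \<in> {-1, 1}" and "\<forall>\<omega> \<in> space M. Y' \<omega> \<in> {-1, 1}"
    and "prob_space.indep_var M (N \<Otimes>\<^sub>M borel) (\<lambda>\<omega>. (X \<omega>, Y \<omega>))
                                (N \<Otimes>\<^sub>M borel) (\<lambda>\<omega>. (X' \<omega>, Y' \<omega>))"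
    and "distr M (N \<Otimes>\<^sub>M borel) (\<lambda>\<omega>. (X \<omega>, Y \<omega>)) = distr M (N \<Otimes>\<^sub>M borel) (\<lambda>\<omega>. (X' \<omega>, Y' \<omega>))"
    and "0 < measure M {\<omega> \<in> space M. Y \<omega> = 1}" and "measure M {\<omega> \<in> space M. Y \<omega> = 1} < 1"
    \<comment> \<open>eta is a version of P(Y = 1 | X = x)\<close>
    and "eta \<in> borel_measurable N" and "\<forall>x. 0 \<le> eta x \<and> eta x \<le> 1"
    and "\<forall>B \<in> sets N. measure M {\<omega> \<in> space M. X \<omega> \<in> B \<and> Y \<omega> = 1}
            = (\<integral>\<omega>. eta (X \<omega>) * indicator {\<omega> \<in> space M. X \<omega> \<in> B} \<omega> \<partial>M)"
    and "atomless_rv M (\<lambda>\<omega>. eta (X \<omega>))"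
    and "0 < u0" and "u0 < 1"
  shows "(\<forall>s s'. s \<in> borel_measurable N \<and> atomless_rv M (\<lambda>\<omega>. s (X \<omega>)) \<and>
              s' \<in> borel_measurable N \<and> atomless_rv M (\<lambda>\<omega>. s' (X \<omega>)) \<and>
              in_Sstar M X N eta u0 s'
            \<longrightarrow> Wcrit M X Y s u0 \<le> Wcrit M X Y s' u0)
       \<and> (\<forall>s. s \<in> borel_measurable N \<and> atomless_rv M (\<lambda>\<omega>. s (X \<omega>)) \<longrightarrow>
            Wcrit M X Y s u0 =
              measure M {\<omega> \<in> space M. Y \<omega> = 1} / 2 * betaS M X Y s u0 * (2 - betaS M X Y s u0)
              + (1 - measure M {\<omega> \<in> space M. Y \<omega> = 1}) * LocAUC M X Y X' Y' s u0)"
  proof -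
  note PM = assms(1)
  interpret P: prob_space M by (rule PM)
  note Xm[measurable] = assms(2) and X'm[measurable] = assms(3) and Ym[measurable] = assms(4)
    and Y'm[measurable] = assms(5) and etam[measurable] = assms(12)
  define Z where "Z = (\<lambda>\<omega>. (X \<omega>, Y \<omega>))"
  define Z' where "Z' = (\<lambda>\<omega>. (X' \<omega>, Y' \<omega>))"
  define D where "D = distr M (N \<Otimes>\<^sub>M borel) Z"
  have Zm[measurable]: "Z \<in> measurable M (N \<Otimes>\<^sub>M borel)" unfolding Z_def by measurable
  have Z'm[measurable]: "Z' \<in> measurable M (N \<Otimes>\<^sub>M borel)" unfolding Z'_def by measurable
  have D: "prob_space D" unfolding D_def by (rule P.prob_space_distr[OF Zm])
  interpret PD: prob_space D by (rule D)
  have setsD: "sets D = sets (N \<Otimes>\<^sub>M borel)" by (simp add: D_def)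
  have spD: "space D = space N \<times> UNIV" by (simp add: D_def space_pair_measure)
  have fstm[measurable]: "fst \<in> measurable D N" by (simp add: D_def)
  have sndm[measurable]: "snd \<in> borel_measurable D" by (simp add: D_def)
  have ZD: "Z \<omega> \<in> space D" if "\<omega> \<in> space M" for \<omega>
    using measurable_space[OF Zm that] by (simp add: D_def)
  have T1: "measure D {z\<in>space D. R z} = measure M {\<omega>\<in>space M. R (Z \<omega>)}"
    if "{z\<in>space D. R z} \<in> sets D" for R
  proof -
    have A: "{z\<in>space D. R z} \<in> sets (N \<Otimes>\<^sub>M borel)" using that setsD by simp
    have "measure D {z\<in>space D. R z} = measure M (Z -` {z\<in>space D. R z} \<inter> space M)"
      using measure_distr[OF Zm A] by (simp add: D_def[symmetric])
    also have "Z -` {z\<in>space D. R z} \<inter> space M = {\<omega>\<in>space M. R (Z \<omega>)}" using ZD by auto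
    finally show ?thesis .
  qed
  have cdfeq: "cdfS M X s t = Fc D (\<lambda>z. s (fst z)) t" if [measurable]: "s \<in> borel_measurable N" for s t
    unfolding cdfS_def Fc_def by (subst T1) (simp_all add: Z_def)
  have toNB: "h \<in> borel_measurable (N \<Otimes>\<^sub>M borel)" if "h \<in> borel_measurable D" for h :: "'a \<times> real \<Rightarrow> real"
    using that by (simp add: D_def)
  have I2: "integral\<^sup>L D h = (\<integral>\<omega>. h (Z \<omega>) \<partial>M)" if "h \<in> borel_measurable D" for h :: "'a \<times> real \<Rightarrow> real"
    using integral_distr[OF Zm toNB[OF that]] by (simp add: D_def[symmetric])
  define L where "L = {z\<in>space D. snd z = 1}"
  have Ls[measurable]: "L \<in> sets D" unfolding L_def by measurable
  have pM: "measure M {\<omega> \<in> space M. Y \<omega> = 1} = measure D L"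
    unfolding L_def by (subst T1) (simp_all add: Z_def)
  define Wint where "Wint = (\<lambda>s. (\<integral>z. PhiW u0 (Fc D (\<lambda>z. s (fst z)) (s (fst z))) * indicator L z \<partial>D))"
  have Weq: "Wcrit M X Y s u0 = Wint s / measure D L" if sm[measurable]: "s \<in> borel_measurable N" for s
  proof -
    have Fm[measurable]: "(\<lambda>z. Fc D (\<lambda>z. s (fst z)) (s (fst z))) \<in> borel_measurable D"
      by (rule Fc_meas[OF D]) measurable
    have "Wint s = (\<integral>\<omega>. PhiW u0 (Fc D (\<lambda>z. s (fst z)) (s (fst (Z \<omega>)))) * indicator L (Z \<omega>) \<partial>M)"
      unfolding Wint_def by (rule I2) measurable
    also have "\<dots> = (\<integral>\<omega>. PhiW u0 (cdfS M X s (s (X \<omega>))) * indicator {\<omega> \<in> space M. Y \<omega> = 1} \<omega> \<partial>M)"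
    proof (intro Bochner_Integration.integral_cong refl)
      fix \<omega> assume w: "\<omega> \<in> space M"
      show "PhiW u0 (Fc D (\<lambda>z. s (fst z)) (s (fst (Z \<omega>)))) * indicator L (Z \<omega>) = PhiW u0 (cdfS M X s (s (X \<omega>))) * indicator {\<omega> \<in> space M. Y \<omega> = 1} \<omega>"
        using w ZD[OF w] by (simp add: cdfeq[OF sm] Z_def L_def indicator_def)
    qed
    finally show ?thesis unfolding Wcrit_def pM by simp
  qed
  have J: "D \<Otimes>\<^sub>M D = distr M ((N \<Otimes>\<^sub>M borel) \<Otimes>\<^sub>M (N \<Otimes>\<^sub>M borel)) (\<lambda>\<omega>. (Z \<omega>, Z' \<omega>))"
  proof -
    have "P.indep_var (N \<Otimes>\<^sub>M borel) Z (N \<Otimes>\<^sub>M borel) Z'" using assms(8) by (simp add: Z_def Z'_def)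
    then have "distr M (N \<Otimes>\<^sub>M borel) Z \<Otimes>\<^sub>M distr M (N \<Otimes>\<^sub>M borel) Z' = distr M ((N \<Otimes>\<^sub>M borel) \<Otimes>\<^sub>M (N \<Otimes>\<^sub>M borel)) (\<lambda>\<omega>. (Z \<omega>, Z' \<omega>))"
      using P.indep_var_distribution_eq by blast
    moreover have "distr M (N \<Otimes>\<^sub>M borel) Z' = D" using assms(9) by (simp add: D_def Z_def Z'_def)
    ultimately show ?thesis by (simp add: D_def)
  qed
  have ZZm: "(\<lambda>\<omega>. (Z \<omega>, Z' \<omega>)) \<in> measurable M ((N \<Otimes>\<^sub>M borel) \<Otimes>\<^sub>M (N \<Otimes>\<^sub>M borel))" by measurable
  have setsDD: "sets (D \<Otimes>\<^sub>M D) = sets ((N \<Otimes>\<^sub>M borel) \<Otimes>\<^sub>M (N \<Otimes>\<^sub>M borel))"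
    by (rule sets_pair_measure_cong[OF setsD setsD])
  have Z'D: "Z' \<omega> \<in> space D" if "\<omega> \<in> space M" for \<omega>
    using measurable_space[OF Z'm that] by (simp add: D_def)
  have T2: "measure (D \<Otimes>\<^sub>M D) {p\<in>space (D \<Otimes>\<^sub>M D). R (fst p) (snd p)} = measure M {\<omega>\<in>space M. R (Z \<omega>) (Z' \<omega>)}"
    if "{p\<in>space (D \<Otimes>\<^sub>M D). R (fst p) (snd p)} \<in> sets (D \<Otimes>\<^sub>M D)" for R
  proof -
    have A: "{p\<in>space (D \<Otimes>\<^sub>M D). R (fst p) (snd p)} \<in> sets ((N \<Otimes>\<^sub>M borel) \<Otimes>\<^sub>M (N \<Otimes>\<^sub>M borel))"
      using that setsDD by simp
    have "measure (D \<Otimes>\<^sub>M D) {p\<in>space (D \<Otimes>\<^sub>M D). R (fst p) (snd p)}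
        = measure M ((\<lambda>\<omega>. (Z \<omega>, Z' \<omega>)) -` {p\<in>space (D \<Otimes>\<^sub>M D). R (fst p) (snd p)} \<inter> space M)"
      using measure_distr[OF ZZm A] by (simp add: J[symmetric])
    also have "(\<lambda>\<omega>. (Z \<omega>, Z' \<omega>)) -` {p\<in>space (D \<Otimes>\<^sub>M D). R (fst p) (snd p)} \<inter> space M = {\<omega>\<in>space M. R (Z \<omega>) (Z' \<omega>)}"
      using ZD Z'D by (auto simp: space_pair_measure)
    finally show ?thesis .
  qed
  have labs: "measure D {z\<in>space D. snd z \<noteq> 1 \<and> snd z \<noteq> -1} = 0"
  proof -
    have "measure D {z\<in>space D. snd z \<noteq> 1 \<and> snd z \<noteq> -1} = measure M {\<omega>\<in>space M. snd (Z \<omega>) \<noteq> 1 \<and> snd (Z \<omega>) \<noteq> -1}"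
      by (rule T1) measurable
    also have "{\<omega>\<in>space M. snd (Z \<omega>) \<noteq> 1 \<and> snd (Z \<omega>) \<noteq> -1} = {}" using assms(6) by (auto simp: Z_def)
    finally show ?thesis by simp
  qed
  have pq: "measure D {z\<in>space D. snd z = -1} = 1 - measure D L"
  proof -
    have "1 = measure D {z\<in>space D. True}" by (simp add: PD.prob_space)
    also have "\<dots> = measure D {z\<in>space D. True \<and> snd z = 1} + measure D {z\<in>space D. True \<and> \<not> snd z = 1}"
      by (rule msplit[OF D]) measurable
    also have "measure D {z\<in>space D. True \<and> \<not> snd z = 1} = measure D {z\<in>space D. snd z = -1}"
      by (rule meq_ae[OF D, where N="\<lambda>z. snd z \<noteq> 1 \<and> snd z \<noteq> -1"]) (use labs in \<open>auto\<close>)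
    finally show ?thesis by (simp add: L_def)
  qed
  have p0: "0 < measure D L" "measure D L < 1" using assms(10,11) pM by simp_all
  have part2: "Wcrit M X Y s u0 =
              measure M {\<omega> \<in> space M. Y \<omega> = 1} / 2 * betaS M X Y s u0 * (2 - betaS M X Y s u0)
              + (1 - measure M {\<omega> \<in> space M. Y \<omega> = 1}) * LocAUC M X Y X' Y' s u0"
    if sm[measurable]: "s \<in> borel_measurable N" and sat: "atomless_rv M (\<lambda>\<omega>. s (X \<omega>))" for s
  proof -
    have gm[measurable]: "(\<lambda>z. s (fst z)) \<in> borel_measurable D" by measurable
    have atg: "\<forall>t. measure D {z \<in> space D. s (fst z) = t} = 0"
    proof
      fix t
      have "measure D {z \<in> space D. s (fst z) = t} = measure M {\<omega>\<in>space M. s (fst (Z \<omega>)) = t}"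
        by (rule T1) measurable
      then show "measure D {z \<in> space D. s (fst z) = t} = 0" using sat by (simp add: atomless_rv_def Z_def)
    qed
    define T where "T = Inf {t. 1 - u0 \<le> Fc D (\<lambda>z. s (fst z)) t}"
    have Qeq: "Qf M X s (1 - u0) = T" unfolding Qf_def T_def using cdfeq[OF sm] by simp
    define b where "b = measure D {z\<in>space D. T \<le> s (fst z) \<and> snd z = 1}"
    define p where "p = measure D L"
    define Loc where "Loc = measure (D \<Otimes>\<^sub>M D) {p\<in>space (D \<Otimes>\<^sub>M D). s (fst (snd p)) < s (fst (fst p)) \<and> T \<le> s (fst (fst p)) \<and> snd (fst p) = 1 \<and> snd (snd p) = -1}"
    have W: "Wint s = b * p - b\<^sup>2 / 2 + Loc"
      using part2_gen[OF D gm sndm atg labs assms(16,17) T_def]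
      by (simp add: Wint_def b_def p_def Loc_def L_def)
    have beta: "betaS M X Y s u0 = b / p"
    proof -
      have "{\<omega> \<in> space M. Qf M X s (1 - u0) \<le> s (X \<omega>)} \<inter> {\<omega> \<in> space M. Y \<omega> = 1} = {\<omega>\<in>space M. T \<le> s (fst (Z \<omega>)) \<and> snd (Z \<omega>) = 1}"
        by (auto simp: Qeq Z_def)
      also have "measure M \<dots> = b" unfolding b_def by (rule T1[symmetric]) measurable
      finally show ?thesis unfolding betaS_def condP_def pM p_def by simp
    qed
    have F: "measure M {\<omega> \<in> space M. Y \<omega> = 1 \<and> Y' \<omega> = -1} = p * (1 - p)"
    proof -
      have "measure M {\<omega> \<in> space M. Y \<omega> = 1 \<and> Y' \<omega> = -1} = measure M {\<omega>\<in>space M. snd (Z \<omega>) = 1 \<and> snd (Z' \<omega>) = -1}"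
        by (simp add: Z_def Z'_def)
      also have "\<dots> = measure (D \<Otimes>\<^sub>M D) {p\<in>space (D \<Otimes>\<^sub>M D). snd (fst p) = 1 \<and> snd (snd p) = -1}"
        by (rule T2[symmetric]) measurable
      also have "\<dots> = (\<integral>z. measure D {z'\<in>space D. snd z = 1 \<and> snd z' = -1} \<partial>D)"
        by (rule FR(2)[OF D, where P="\<lambda>z z'. snd z = 1 \<and> snd z' = -1"]) measurable
      also have "\<dots> = (\<integral>z. measure D {z'\<in>space D. snd z' = -1} * indicator L z \<partial>D)"
        by (intro Bochner_Integration.integral_cong refl) (auto simp: L_def indicator_def)
      also have "\<dots> = (1 - p) * p" using pq by (simp add: p_def)
      finally show ?thesis by simp
    qed
    have loc: "LocAUC M X Y X' Y' s u0 = Loc / (p * (1 - p))"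
    proof -
      have "{\<omega> \<in> space M. s (X' \<omega>) < s (X \<omega>) \<and> Qf M X s (1 - u0) \<le> s (X \<omega>)} \<inter> {\<omega> \<in> space M. Y \<omega> = 1 \<and> Y' \<omega> = -1}
          = {\<omega>\<in>space M. s (fst (Z' \<omega>)) < s (fst (Z \<omega>)) \<and> T \<le> s (fst (Z \<omega>)) \<and> snd (Z \<omega>) = 1 \<and> snd (Z' \<omega>) = -1}"
        by (auto simp: Qeq Z_def Z'_def)
      also have "measure M \<dots> = Loc" unfolding Loc_def by (rule T2[symmetric]) measurable
      finally show ?thesis unfolding LocAUC_def condP_def F by simp
    qed
    show ?thesis
      unfolding Weq[OF sm] W beta loc pM p_def[symmetric]
      using p0 unfolding p_def[symmetric]
      by (simp add: field_simps power2_eq_square)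
  qed
  have em[measurable]: "(\<lambda>z. eta (fst z)) \<in> borel_measurable D" by measurable
  have eb: "\<forall>z\<in>space D. 0 \<le> eta (fst z) \<and> eta (fst z) \<le> 1" using assms(13) by simp
  have ate: "\<forall>t. measure D {z \<in> space D. eta (fst z) = t} = 0"
  proof
    fix t
    have "measure D {z \<in> space D. eta (fst z) = t} = measure M {\<omega>\<in>space M. eta (fst (Z \<omega>)) = t}"
      by (rule T1) measurable
    then show "measure D {z \<in> space D. eta (fst z) = t} = 0" using assms(15) by (simp add: atomless_rv_def Z_def)
  qed
  have hyp: "\<forall>r. measure D ({z\<in>space D. r < PhiW u0 (Fc D (\<lambda>z. h (fst z)) (h (fst z)))} \<inter> {z\<in>space D. snd z = 1})
               = (\<integral>z. eta (fst z) * indicator {z\<in>space D. r < PhiW u0 (Fc D (\<lambda>z. h (fst z)) (h (fst z)))} z \<partial>D)"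
    if hm[measurable]: "h \<in> borel_measurable N" for h
  proof
    fix r
    have ghm[measurable]: "(\<lambda>z. h (fst z)) \<in> borel_measurable D" by measurable
    have "mono (Fc D (\<lambda>z. h (fst z)))" using Fc_mono[OF D ghm] by (simp add: monoI)
    then have Fm[measurable]: "Fc D (\<lambda>z. h (fst z)) \<in> borel_measurable borel" using borel_measurable_mono by blast
    define B where "B = {x\<in>space N. r < PhiW u0 (Fc D (\<lambda>z. h (fst z)) (h x))}"
    have Bs[measurable]: "B \<in> sets N" unfolding B_def by measurable
    have "{z\<in>space D. r < PhiW u0 (Fc D (\<lambda>z. h (fst z)) (h (fst z)))} \<inter> {z\<in>space D. snd z = 1} = {z\<in>space D. fst z \<in> B \<and> snd z = 1}"
      by (auto simp: B_def spD)
    also have "measure D \<dots> = measure M {\<omega>\<in>space M. fst (Z \<omega>) \<in> B \<and> snd (Z \<omega>) = 1}"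
      by (rule T1) measurable
    also have "\<dots> = (\<integral>\<omega>. eta (X \<omega>) * indicator {\<omega> \<in> space M. X \<omega> \<in> B} \<omega> \<partial>M)"
      using assms(14) Bs by (simp add: Z_def)
    also have "\<dots> = (\<integral>\<omega>. eta (fst (Z \<omega>)) * indicator {z\<in>space D. r < PhiW u0 (Fc D (\<lambda>z. h (fst z)) (h (fst z)))} (Z \<omega>) \<partial>M)"
    proof (intro Bochner_Integration.integral_cong refl)
      fix \<omega> assume w: "\<omega> \<in> space M"
      show "eta (X \<omega>) * indicator {\<omega> \<in> space M. X \<omega> \<in> B} \<omega> = eta (fst (Z \<omega>)) * indicator {z\<in>space D. r < PhiW u0 (Fc D (\<lambda>z. h (fst z)) (h (fst z)))} (Z \<omega>)"
        using w ZD[OF w] by (simp add: B_def Z_def indicator_def spD)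
    qed
    also have "\<dots> = (\<integral>z. eta (fst z) * indicator {z\<in>space D. r < PhiW u0 (Fc D (\<lambda>z. h (fst z)) (h (fst z)))} z \<partial>D)"
      by (rule I2[symmetric]) measurable
    finally show "measure D ({z\<in>space D. r < PhiW u0 (Fc D (\<lambda>z. h (fst z)) (h (fst z)))} \<inter> {z\<in>space D. snd z = 1})
               = (\<integral>z. eta (fst z) * indicator {z\<in>space D. r < PhiW u0 (Fc D (\<lambda>z. h (fst z)) (h (fst z)))} z \<partial>D)" .
  qed
  have part1: "Wcrit M X Y s u0 \<le> Wcrit M X Y s' u0"
    if sm[measurable]: "s \<in> borel_measurable N" and sat: "atomless_rv M (\<lambda>\<omega>. s (X \<omega>))"
      and s'm[measurable]: "s' \<in> borel_measurable N" and sst: "in_Sstar M X N eta u0 s'" for s s'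
  proof -
    have gm[measurable]: "(\<lambda>z. s (fst z)) \<in> borel_measurable D" by measurable
    have g'm[measurable]: "(\<lambda>z. s' (fst z)) \<in> borel_measurable D" by measurable
    have atg: "\<forall>t. measure D {z \<in> space D. s (fst z) = t} = 0"
    proof
      fix t
      have "measure D {z \<in> space D. s (fst z) = t} = measure M {\<omega>\<in>space M. s (fst (Z \<omega>)) = t}"
        by (rule T1) measurable
      then show "measure D {z \<in> space D. s (fst z) = t} = 0" using sat by (simp add: atomless_rv_def Z_def)
    qed
    have le: "Wint s \<le> Wint eta"
      using part1_gen[OF D sndm gm em eb atg ate assms(16,17) hyp[OF sm] hyp[OF etam]]
      by (simp add: Wint_def L_def)
    have eq: "Wint s' = Wint eta"
    proof -
      define Qe where "Qe = Inf {t. 1 - u0 \<le> Fc D (\<lambda>z. eta (fst z)) t}"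
      have a: "0 < 1 - u0" "1 - u0 < 1" using assms(16,17) by auto
      note FQ = Fc_quantile[OF D em ate a, folded Qe_def]
      have QeQ: "Qf M X eta (1 - u0) = Qe" unfolding Qf_def Qe_def using cdfeq[OF etam] by simp
      define C where "C = {x\<in>space N. Qe \<le> eta x}"
      have Ceq: "Cset M X N eta u0 = C" unfolding Cset_def C_def QeQ by simp
      have sC: "\<forall>x\<in>C. s' x = eta x" and sNC: "\<forall>x\<in>space N - C. s' x < (INF y\<in>C. eta y)"
        using sst unfolding in_Sstar_def Ceq by auto
      have bdd: "bdd_below (eta ` C)" using assms(13) by (intro bdd_belowI[of _ 0]) auto
      have Ims: "\<And>t. {z\<in>space D. eta (fst z) \<le> t} \<in> sets D" by measurable
      have Ims': "\<And>t. {z\<in>space D. s' (fst z) \<le> t} \<in> sets D" by measurable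
      have ptw: "PhiW u0 (Fc D (\<lambda>z. s' (fst z)) (s' x)) = PhiW u0 (Fc D (\<lambda>z. eta (fst z)) (eta x))"
        if x: "x \<in> space N" for x
      proof (cases "x \<in> C")
        case True
        have I: "(INF y\<in>C. eta y) \<le> eta x" using bdd True by (rule cINF_lower)
        have Qx: "Qe \<le> eta x" using True C_def by simp
        have "Fc D (\<lambda>z. s' (fst z)) (eta x) = Fc D (\<lambda>z. eta (fst z)) (eta x)"
          unfolding Fc_def
        proof (intro arg_cong[where f="measure D"] Collect_cong conj_cong refl)
          fix z assume z: "z \<in> space D"
          then have fz: "fst z \<in> space N" by (simp add: spD mem_Times_iff)
          show "s' (fst z) \<le> eta x \<longleftrightarrow> eta (fst z) \<le> eta x"
          proof (cases "fst z \<in> C")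
            case True then show ?thesis using sC by simp
          next
            case False
            then have "s' (fst z) < (INF y\<in>C. eta y)" "eta (fst z) < Qe" using sNC fz C_def by auto
            then show ?thesis using I Qx by simp
          qed
        qed
        then show ?thesis using sC True by simp
      next
        case False
        then have xQ: "eta x < Qe" using x C_def by simp
        have "\<not> 1 - u0 \<le> Fc D (\<lambda>z. eta (fst z)) (eta x)"
        proof
          assume "1 - u0 \<le> Fc D (\<lambda>z. eta (fst z)) (eta x)"
          then have "Qe \<le> eta x" by (rule FQ(2))
          then show False using xQ by simp
        qed
        then have z1: "PhiW u0 (Fc D (\<lambda>z. eta (fst z)) (eta x)) = 0" by (simp add: PhiW_def)
        have sx: "s' x < (INF y\<in>C. eta y)" using sNC x False by simp
        have "Fc D (\<lambda>z. s' (fst z)) (s' x) \<le> Fc D (\<lambda>z. eta (fst z)) Qe"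
          unfolding Fc_def
        proof (rule PD.finite_measure_mono)
          show "{z \<in> space D. eta (fst z) \<le> Qe} \<in> sets D" by (rule Ims)
          show "{z \<in> space D. s' (fst z) \<le> s' x} \<subseteq> {z \<in> space D. eta (fst z) \<le> Qe}"
          proof (rule subsetI)
            fix z assume z: "z \<in> {z \<in> space D. s' (fst z) \<le> s' x}"
            then have fz: "fst z \<in> space N" by (simp add: spD mem_Times_iff)
            have "fst z \<notin> C"
            proof
              assume c: "fst z \<in> C"
              have "(INF y\<in>C. eta y) \<le> eta (fst z)" using bdd c by (rule cINF_lower)
              then show False using sC c z sx by auto
            qed
            then show "z \<in> {z \<in> space D. eta (fst z) \<le> Qe}" using z fz C_def by auto
          qed
        qed
        then have "\<not> 1 - u0 < Fc D (\<lambda>z. s' (fst z)) (s' x)" using FQ(1) by simp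
        then have "PhiW u0 (Fc D (\<lambda>z. s' (fst z)) (s' x)) = 0" by (simp add: PhiW_def)
        then show ?thesis using z1 by simp
      qed
      show ?thesis unfolding Wint_def
        by (intro Bochner_Integration.integral_cong refl) (simp add: ptw spD mem_Times_iff)
    qed
    show ?thesis using le eq p0 Weq[OF sm] Weq[OF s'm] by (simp add: divide_right_mono)
  qed
  show ?thesis using part1 part2 by blast
qed


end
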